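(* Consider the following fully discrete moment scheme for the one-dimensional Boltzmann–BGK equation. Fix $M\ge 3$ and $N>M$, an interval $[\xi_{\min},\xi_{\max}]$, the $N$-point Gauss–Legendre nodes $\xi_1,\dots,\xi_N$ and weights $\omega_1,\dots,\omega_N>0$ on it, $A\in\mathbb R^{M\times N}$ with $A_{mi}=\xi_i^{m-1}$, $A_{\mathrm{cons}}\in\mathbb R^{3\times N}$ the first three rows of $A$, $L=\operatorname{diag}(\omega_i)$, $\Xi=\operatorname{diag}(\xi_i)$, $|\Xi|=\operatorname{diag}(|\xi_i|)$, and $R=\{ALz: z\in\mathbb R^N,\ z>0\}$. The spatial domain $[x_{\min},x_{\max}]$ is divided into $N_x$ uniform cells $\mathcal I_i$ of width $\Delta x$, time steps have size $\Delta t$, and $\Lambda:=\Delta t/\Delta x$. Given positive initial data $f_0(x,\xi)$ and positive inflow boundary data $f_{in}(x,t,\xi)$, the moment vectors $u_i^k\in\mathbb R^M$ are initialized by $u_i^1=\frac1{\Delta x}\int_{\mathcal I_i}\sum_{j}\omega_j(1,\xi_j,\dots,\xi_j^{M-1})^T f_0(x,\xi_j)\,dx$ and for $k=1,2,\dots$ updated by: (1) (entropy minimization) $W_{\mathcal M,i}^k\in\mathbb R^N_{>0}$ minimizes $\sum_j w_j\log(w_j)\omega_j$ over $w\in\mathbb R^N_{>0}$ subject to $A_{\mathrm{cons}}Lw$ being equal to the first three entries of $u_i^k$; (2) (collision) $u_i^{k^*}=\frac{1}{1+\Delta t/\tau_i}u_i^k+\frac{\Delta t/\tau_i}{1+\Delta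 t/\tau_i}ALW_{\mathcal M,i}^k$ with relaxation times $\tau_i>0$; (3) (optimization) $W_i^{k^*}$ solves $\min_{W\in\mathbb R^N}\frac12\|W\|_{l^2}^2$ subject to $ALW=u_i^{k^*}$, $W>0$; (4) (transport) $u_i^{k+1}=u_i^{k^*}-\Lambda\big(\mathcal F(W_{i+1}^{k^*},W_i^{k^*})-\mathcal F(W_i^{k^*},W_{i-1}^{k^*})\big)$, where $\mathcal F(W_1,W_2)=\frac12\big(AL(\Xi-|\Xi|)W_1+AL(\Xi+|\Xi|)W_2\big)$ and the ghost values $W_0^{k^*}$, $W_{N_x+1}^{k^*}$ are the vectors of values $(f_{in}(x,t_k,\xi_j))_j$ at $x=x_{\min}$ and $x=x_{\max}$ respectively. Assume that for all $x$ and $t$ the vectors $\sum_j\omega_j(1,\xi_j,\dots,\xi_j^{M-1})^T f_{in}(x,t,\xi_j)$ and $\sum_j\omega_j(1,\xi_j,\dots,\xi_j^{M-1})^T f_0(x,\xi_j)$ belong to $R$. Then the quadratic optimization problem in step (3) is feasible (at every time step and in every cell) if $\Lambda\in\big(0,\min\{|\xi_{\max}^{-1}|,|\xi_{\min}^{-1}|\}\big]$.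
   Context: Vector inequalities $z>0$, $W>0$ are componentwise; $\mathbb R^N_{>0}$ denotes vectors with all entries positive. The scheme is a finite-volume/method-of-moments discretization in which moments are computed by the Gauss–Legendre quadrature on the truncated velocity interval $[\xi_{\min},\xi_{\max}]$, and the optimization problem in step (3) is called feasible if its constraint set is nonempty. *)

theory Defs
  imports "HOL-Analysis.Analysis"
begin

text \<open>Vectors in R^N / R^M are represented as functions nat => real, only the
entries with index below N (resp. M) being relevant. Node j (0-based, j < N)
is xi j, weight omega j. Row m (0-based, m < M) of A is (xi j)^m.\<close>

definition gauss_legendre ::
  "real \<Rightarrow> real \<Rightarrow> nat \<Rightarrow> (nat \<Rightarrow> real) \<Rightarrow> (nat \<Rightarrow> real) \<Rightarrow> bool" where
  "gauss_legendre a b N xi omega \<longleftrightarrow>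
     a < b \<and> 0 < N \<and>
     (\<forall>j. Suc j < N \<longrightarrow> xi j < xi (Suc j)) \<and>
     (\<forall>j<N. a \<le> xi j \<and> xi j \<le> b) \<and>
     (\<forall>p < 2 * N. (\<Sum>j<N. omega j * xi j ^ p) = integral {a..b} (\<lambda>x. x ^ p))"

text \<open>m-th entry (m 0-based) of the vector A L w.\<close>
definition mom :: "nat \<Rightarrow> (nat \<Rightarrow> real) \<Rightarrow> (nat \<Rightarrow> real) \<Rightarrow> nat \<Rightarrow> (nat \<Rightarrow> real) \<Rightarrow> real" where
  "mom N xi omega m w = (\<Sum>j<N. omega j * xi j ^ m * w j)"

definition in_R :: "nat \<Rightarrow> nat \<Rightarrow> (nat \<Rightarrow> real) \<Rightarrow> (nat \<Rightarrow> real) \<Rightarrow> (nat \<Rightarrow> real) \<Rightarrow> bool" where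
  "in_R M N xi omega u \<longleftrightarrow>
     (\<exists>z. (\<forall>j<N. 0 < z j) \<and> (\<forall>m<M. u m = mom N xi omega m z))"

definition flux :: "nat \<Rightarrow> (nat \<Rightarrow> real) \<Rightarrow> (nat \<Rightarrow> real) \<Rightarrow> (nat \<Rightarrow> real) \<Rightarrow> (nat \<Rightarrow> real) \<Rightarrow> nat \<Rightarrow> real" where
  "flux N xi omega W1 W2 m =
     (1/2) * ((\<Sum>j<N. omega j * xi j ^ m * (xi j - \<bar>xi j\<bar>) * W1 j)
            + (\<Sum>j<N. omega j * xi j ^ m * (xi j + \<bar>xi j\<bar>) * W2 j))"

definition qp_feasible_set :: "nat \<Rightarrow> nat \<Rightarrow> (nat \<Rightarrow> real) \<Rightarrow> (nat \<Rightarrow> real) \<Rightarrow> (nat \<Rightarrow> real) \<Rightarrow> (nat \<Rightarrow> real) set" where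
  "qp_feasible_set M N xi omega u =
     {W. (\<forall>j<N. 0 < W j) \<and> (\<forall>m<M. mom N xi omega m W = u m)}"

end

theory Submission
  imports Defs
begin

lemma intpos:
  fixes f :: "real \<Rightarrow> real"
  assumes "f integrable_on {a..b}" "a < b" "\<And>x. f x > 0"
  shows "integral {a..b} f > 0"
proof -
  have ai: "set_integrable lebesgue {a..b} f"
    using assms by (intro nonnegative_absolutely_integrable_1) (auto intro: less_imp_le)
  have eq: "integral {a..b} f = (LINT x|lebesgue. indicator {a..b} x *\<^sub>R f x)"
    using set_lebesgue_integral_eq_integral(2)[OF ai] by (simp add: set_lebesgue_integral_def)
  have ge: "integral {a..b} f \<ge> 0"
    using assms by (intro integral_nonneg) (auto intro: less_imp_le)
  have "integral {a..b} f \<noteq> 0"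
  proof
    assume z: "integral {a..b} f = 0"
    have "AE x in lebesgue. indicator {a..b} x *\<^sub>R f x = 0"
    proof -
      have i: "integrable lebesgue (\<lambda>x. indicator {a..b} x *\<^sub>R f x)"
        using ai unfolding set_integrable_def .
      have n: "AE x in lebesgue. 0 \<le> indicator {a..b} x *\<^sub>R f x"
        using assms(3) by (auto simp: indicator_def intro: less_imp_le)
      show ?thesis using integral_nonneg_eq_0_iff_AE[OF i n] z eq by simp
    qed
    then have "AE x in lebesgue. x \<notin> {a..b}"
    proof (rule AE_mp, intro AE_I2 impI)
      fix x assume "indicator {a..b} x *\<^sub>R f x = (0::real)"
      moreover have "f x \<noteq> 0" using assms(3)[of x] by simp
      ultimately show "x \<notin> {a..b}" by (auto simp: indicator_def split: if_splits)
    qed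
    then have "{a..b} \<in> null_sets lebesgue"
      by (simp add: AE_iff_null_sets)
    then have "{a..b} \<in> null_sets lborel"
      by (simp add: null_sets_completion_iff)
    then have "emeasure lborel {a..b} = 0" by (simp add: null_sets_def)
    then show False using assms(2) by simp
  qed
  with ge show ?thesis by simp
qed

theorem lemma3p1:
  fixes M N Nx K i :: nat
    and xi omega :: "nat \<Rightarrow> real"
    and ximin ximax xmin xmax dt :: real
    and tau :: "nat \<Rightarrow> real"
    and f0 :: "real \<Rightarrow> real \<Rightarrow> real"
    and fin :: "real \<Rightarrow> real \<Rightarrow> real \<Rightarrow> real"
    and u ustar :: "nat \<Rightarrow> nat \<Rightarrow> nat \<Rightarrow> real"
    and WM Wstar :: "nat \<Rightarrow> nat \<Rightarrow> nat \<Rightarrow> real"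
    and dx Lam :: real
    and tk :: "nat \<Rightarrow> real"
    and Wg :: "nat \<Rightarrow> nat \<Rightarrow> nat \<Rightarrow> real"
  defines "dx \<equiv> (xmax - xmin) / real Nx"
    and "Lam \<equiv> dt / dx"
    and "tk \<equiv> (\<lambda>k. (real k - 1) * dt)"
    and "Wg \<equiv> (\<lambda>i k. if i = 0 then (\<lambda>j. fin xmin (tk k) (xi j))
                      else if i = Suc Nx then (\<lambda>j. fin xmax (tk k) (xi j))
                      else Wstar i k)"
  assumes M3: "3 \<le> M" and NM: "M < N"
    and GL: "gauss_legendre ximin ximax N xi omega"
    and wpos: "\<forall>j<N. 0 < omega j"
    and dom: "xmin < xmax" and Nx1: "1 \<le> Nx" and dtpos: "0 < dt"
    and taupos: "\<forall>i. 0 < tau i"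
    and f0pos: "\<forall>x v. 0 < f0 x v"
    and finpos: "\<forall>x t v. 0 < fin x t v"
    and f0int: "\<forall>j<N. (\<lambda>x. f0 x (xi j)) integrable_on {xmin..xmax}"
    and finR: "\<forall>x t. in_R M N xi omega (\<lambda>m. mom N xi omega m (\<lambda>j. fin x t (xi j)))"
    and f0R: "\<forall>x. in_R M N xi omega (\<lambda>m. mom N xi omega m (\<lambda>j. f0 x (xi j)))"
    and CFL: "0 < Lam \<and> Lam * \<bar>ximax\<bar> \<le> 1 \<and> Lam * \<bar>ximin\<bar> \<le> 1"
    and init: "\<forall>i\<in>{1..Nx}. \<forall>m<M. u i 1 m =
        (1 / dx) * integral {xmin + (real i - 1) * dx .. xmin + real i * dx}
                     (\<lambda>x. \<Sum>j<N. omega j * xi j ^ m * f0 x (xi j))"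
    and step1: "\<forall>k\<in>{1..K}. \<forall>i\<in>{1..Nx}.
        (\<forall>j<N. 0 < WM i k j)
      \<and> (\<forall>m<3. mom N xi omega m (WM i k) = u i k m)
      \<and> (\<forall>w. (\<forall>j<N. 0 < w j) \<and> (\<forall>m<3. mom N xi omega m w = u i k m) \<longrightarrow>
             (\<Sum>j<N. WM i k j * ln (WM i k j) * omega j) \<le> (\<Sum>j<N. w j * ln (w j) * omega j))"
    and step2: "\<forall>k\<in>{1..K}. \<forall>i\<in>{1..Nx}. \<forall>m<M.
        ustar i k m = 1 / (1 + dt / tau i) * u i k m
                    + (dt / tau i) / (1 + dt / tau i) * mom N xi omega m (WM i k)"
    and step3: "\<forall>k\<in>{1..<K}. \<forall>i\<in>{1..Nx}.
        Wstar i k \<in> qp_feasible_set M N xi omega (ustar i k)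
      \<and> (\<forall>W\<in>qp_feasible_set M N xi omega (ustar i k).
            (1/2) * (\<Sum>j<N. (Wstar i k j)\<^sup>2) \<le> (1/2) * (\<Sum>j<N. (W j)\<^sup>2))"
    and step4: "\<forall>k\<in>{1..<K}. \<forall>i\<in>{1..Nx}. \<forall>m<M.
        u i (Suc k) m = ustar i k m
          - Lam * (flux N xi omega (Wg (Suc i) k) (Wg i k) m
                   - flux N xi omega (Wg i k) (Wg (i - 1) k) m)"
    and K1: "1 \<le> K" and icell: "i \<in> {1..Nx}"
  shows "qp_feasible_set M N xi omega (ustar i K) \<noteq> {}"

proof -
  have dxpos: "dx > 0" using dom Nx1 unfolding dx_def by simp
  have Lpos: "Lam > 0" using CFL by simp
  have iN: "1 \<le> i" "i \<le> Nx" using icell by auto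
  have nodes: "\<forall>j<N. ximin \<le> xi j \<and> xi j \<le> ximax" using GL unfolding gauss_legendre_def by blast
  have cfl: "Lam * \<bar>xi j\<bar> \<le> 1" if "j < N" for j
  proof (cases "xi j \<ge> 0")
    case True
    then have "\<bar>xi j\<bar> \<le> \<bar>ximax\<bar>" using nodes that by auto
    then have "Lam * \<bar>xi j\<bar> \<le> Lam * \<bar>ximax\<bar>" using Lpos by (intro mult_left_mono) auto
    then show ?thesis using CFL by linarith
  next
    case False
    then have "\<bar>xi j\<bar> \<le> \<bar>ximin\<bar>" using nodes that by auto
    then have "Lam * \<bar>xi j\<bar> \<le> Lam * \<bar>ximin\<bar>" using Lpos by (intro mult_left_mono) auto
    then show ?thesis using CFL by linarith
  qed
  have uK: "in_R M N xi omega (u i K)"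
  proof (cases "K = 1")
    case True
    define a where "a = xmin + (real i - 1) * dx"
    define b where "b = xmin + real i * dx"
    have ab: "a < b" using dxpos unfolding a_def b_def by (simp add: algebra_simps)
    have sub: "{a..b} \<subseteq> {xmin..xmax}"
    proof -
      have "a \<ge> xmin" using iN dxpos unfolding a_def by simp
      moreover have "real i * dx \<le> real Nx * dx" using iN dxpos by (intro mult_right_mono) auto
      then have "b \<le> xmax" using Nx1 unfolding b_def dx_def by simp
      ultimately show ?thesis by auto
    qed
    have intj: "(\<lambda>x. f0 x (xi j)) integrable_on {a..b}" if "j < N" for j
      using integrable_on_subinterval[OF f0int[rule_format, OF that] sub] .
    define z where "z j = (1/dx) * integral {a..b} (\<lambda>x. f0 x (xi j))" for j
    have zpos: "\<forall>j<N. 0 < z j"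
      using intpos[OF intj ab] f0pos dxpos unfolding z_def by simp
    have "u i K m = mom N xi omega m z" if "m < M" for m
    proof -
      have "u i K m = (1/dx) * integral {a..b} (\<lambda>x. \<Sum>j<N. omega j * xi j ^ m * f0 x (xi j))"
        using init icell that True unfolding a_def b_def by auto
      also have "integral {a..b} (\<lambda>x. \<Sum>j<N. omega j * xi j ^ m * f0 x (xi j))
          = (\<Sum>j<N. integral {a..b} (\<lambda>x. omega j * xi j ^ m * f0 x (xi j)))"
        by (rule integral_sum) (auto intro!: integrable_on_cmult_left[unfolded scaleR_conv_of_real] integrable_on_mult_right intj)
      also have "\<dots> = (\<Sum>j<N. omega j * xi j ^ m * integral {a..b} (\<lambda>x. f0 x (xi j)))"
        by (simp add: integral_mult_right)
      finally show ?thesis unfolding mom_def z_def by (simp add: sum_distrib_left algebra_simps)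
    qed
    then show ?thesis unfolding in_R_def using zpos by blast
  next
    case False
    then obtain k where kK: "K = Suc k" and k1: "k \<in> {1..<K}" using K1
      by (metis Suc_pred' atLeastLessThan_iff lessI less_one linorder_not_le not_gr_zero le_neq_implies_less)
    define Wi where "Wi = Wg i k"
    define Wp where "Wp = Wg (Suc i) k"
    define Wm where "Wm = Wg (i - 1) k"
    have Wi_eq: "Wi = Wstar i k" using iN unfolding Wi_def Wg_def by auto
    have Wipos: "\<forall>j<N. 0 < Wi j" and Wimom: "\<forall>m<M. mom N xi omega m Wi = ustar i k m"
      using step3 k1 icell unfolding Wi_eq qp_feasible_set_def by auto
    have Wppos: "\<forall>j<N. 0 < Wp j"
    proof (cases "i = Nx")
      case True then show ?thesis unfolding Wp_def Wg_def using finpos by simp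
    next
      case False
      then have "Suc i \<in> {1..Nx}" using iN by auto
      then show ?thesis using step3 k1 False unfolding Wp_def Wg_def qp_feasible_set_def by auto
    qed
    have Wmpos: "\<forall>j<N. 0 < Wm j"
    proof (cases "i = 1")
      case True then show ?thesis unfolding Wm_def Wg_def using finpos by simp
    next
      case False
      then have "i - 1 \<in> {1..Nx}" "i - 1 \<noteq> 0" "i - 1 \<noteq> Suc Nx" using iN by auto
      then show ?thesis using step3 k1 unfolding Wm_def Wg_def qp_feasible_set_def by auto
    qed
    define z where "z j = Wi j - Lam * (1/2 * ((xi j - \<bar>xi j\<bar>) * Wp j + (xi j + \<bar>xi j\<bar>) * Wi j)
        - 1/2 * ((xi j - \<bar>xi j\<bar>) * Wi j + (xi j + \<bar>xi j\<bar>) * Wm j))" for j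
    have zpos: "0 < z j" if "j < N" for j
    proof -
      have c: "Lam * \<bar>xi j\<bar> \<le> 1" using cfl that .
      have a: "Wi j > 0" "Wp j > 0" "Wm j > 0" using Wipos Wppos Wmpos that by auto
      show ?thesis
      proof (cases "xi j \<ge> 0")
        case True
        then have e: "z j = (1 - Lam * xi j) * Wi j + (Lam * xi j) * Wm j"
          unfolding z_def by (simp add: algebra_simps)
        have l: "Lam * xi j \<ge> 0" using True Lpos by simp
        show ?thesis
        proof (cases "Lam * xi j < 1")
          case True
          then have "(1 - Lam * xi j) * Wi j > 0" using a by simp
          moreover have "(Lam * xi j) * Wm j \<ge> 0" using l a by simp
          ultimately show ?thesis using e by linarith
        next
          case False
          then have "Lam * xi j = 1" using c \<open>xi j \<ge> 0\<close> by simp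
          then show ?thesis using e a by simp
        qed
      next
        case False
        then have e: "z j = (1 + Lam * xi j) * Wi j + (- (Lam * xi j)) * Wp j"
          unfolding z_def by (simp add: algebra_simps)
        have l: "- (Lam * xi j) \<ge> 0" using False Lpos by (simp add: mult_pos_neg less_imp_le)
        show ?thesis
        proof (cases "- (Lam * xi j) < 1")
          case True
          then have "(1 + Lam * xi j) * Wi j > 0" using a by simp
          moreover have "(- (Lam * xi j)) * Wp j \<ge> 0" using l a by (simp add: mult_nonpos_nonneg less_imp_le)
          ultimately show ?thesis using e by linarith
        next
          case False
          then have "- (Lam * xi j) = 1" using c \<open>\<not> xi j \<ge> 0\<close> by simp
          then show ?thesis using e a by simp
        qed
      qed
    qed
    have "u i K m = mom N xi omega m z" if "m < M" for m
    proof -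
      have "u i K m = ustar i k m - Lam * (flux N xi omega Wp Wi m - flux N xi omega Wi Wm m)"
        using step4 k1 icell that unfolding kK Wp_def Wi_def Wm_def by auto
      also have "\<dots> = mom N xi omega m Wi - Lam * (flux N xi omega Wp Wi m - flux N xi omega Wi Wm m)"
        using Wimom that by simp
      also have "\<dots> = mom N xi omega m z"
        unfolding mom_def flux_def z_def
        by (simp add: sum_subtractf sum.distrib sum_distrib_left algebra_simps)
      finally show ?thesis .
    qed
    then show ?thesis unfolding in_R_def using zpos by blast
  qed
  then obtain z where zpos: "\<forall>j<N. 0 < z j" and zm: "\<forall>m<M. u i K m = mom N xi omega m z"
    unfolding in_R_def by blast
  define r where "r = dt / tau i"
  have rpos: "r > 0" using dtpos taupos unfolding r_def by simp
  have WMpos: "\<forall>j<N. 0 < WM i K j" using step1 K1 icell by auto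
  define W where "W j = 1 / (1 + r) * z j + r / (1 + r) * WM i K j" for j
  have "W \<in> qp_feasible_set M N xi omega (ustar i K)"
    unfolding qp_feasible_set_def
  proof (intro CollectI conjI allI impI)
    fix j assume "j < N"
    then show "0 < W j" unfolding W_def using zpos WMpos rpos
      by (intro add_pos_pos) auto
  next
    fix m assume m: "m < M"
    have "ustar i K m = 1 / (1 + r) * mom N xi omega m z + r / (1 + r) * mom N xi omega m (WM i K)"
      using step2 K1 icell m zm unfolding r_def by auto
    also have "\<dots> = mom N xi omega m W"
      unfolding mom_def W_def by (simp add: sum.distrib sum_distrib_left algebra_simps)
    finally show "mom N xi omega m W = ustar i K m" by simp
  qed
  then show ?thesis by blast
qed

end
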